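(* Let $G$ be a bipartite super edge-magic simple graph with stable sets $X$ and $Y$, and suppose $G\cong H_1\oplus H_2$ is a decomposition of $G$. Then $\lim_{n\to\infty}|\sigma_{S_{2n}(G;H_1,H_2)}|=\infty$.
   Context: For a $(p,q)$-graph $G$ ($p$ vertices, $q$ edges), an edge-magic labeling is a bijection $f:V(G)\cup E(G)\to[1,p+q]$ such that $f(x)+f(xy)+f(y)$ equals a constant (the valence) for every edge $xy$; it is super edge-magic if moreover $f(V(G))=[1,p]$. For a graph $H$, $\sigma_H$ is the set of integers that are valences of super edge-magic labelings of $H$. A decomposition $G\cong H_1\oplus H_2$ means $H_1,H_2$ are subgraphs of $G$ whose edge sets partition $E(G)$. Writing $X=\{x_i\}_{i=1}^s$, $Y=\{y_j\}_{j=1}^t$, $S_{2n}(G;H_1,H_2)$ is the graph with vertex set $X\cup Y\cup\bigcup_{k=1}^n X_k\cup\bigcup_{k=1}^n Y_k$, where $X_k=\{x_i^k\}_{i=1}^s$, $Y_k=\{y_j^k\}_{j=1}^t$ are new vertices, and edge set $E(G)\cup\{x_iy_j^k: x_iy_j\in E(H_1),\,k\in[1,n]\}\cup\{x_i^ky_j: x_iy_j\in E(H_2),\,k\in[1,n]\}$. *)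

theory Defs
  imports Main "HOL-Library.Extended_Nat"
begin

definition simple_graph :: "'a set \<Rightarrow> 'a set set \<Rightarrow> bool" where
  "simple_graph V E \<longleftrightarrow> finite V \<and>
     (\<forall>e\<in>E. \<exists>x y. x \<in> V \<and> y \<in> V \<and> x \<noteq> y \<and> e = {x, y})"

definition sem_labeling :: "'a set \<Rightarrow> 'a set set \<Rightarrow> ('a + 'a set \<Rightarrow> int) \<Rightarrow> int \<Rightarrow> bool" where
  "sem_labeling V E f k \<longleftrightarrow>
     bij_betw f (Inl ` V \<union> Inr ` E) {1 .. int (card V + card E)} \<and>
     f ` (Inl ` V) = {1 .. int (card V)} \<and>
     (\<forall>x y. {x, y} \<in> E \<longrightarrow> f (Inl x) + f (Inr {x, y}) + f (Inl y) = k)"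

definition super_edge_magic :: "'a set \<Rightarrow> 'a set set \<Rightarrow> bool" where
  "super_edge_magic V E \<longleftrightarrow> (\<exists>f k. sem_labeling V E f k)"

definition sigma :: "'a set \<Rightarrow> 'a set set \<Rightarrow> int set" where
  "sigma V E = {k. \<exists>f. sem_labeling V E f k}"

definition bipartite_with :: "'a set \<Rightarrow> 'a set set \<Rightarrow> 'a set \<Rightarrow> 'a set \<Rightarrow> bool" where
  "bipartite_with V E X Y \<longleftrightarrow> X \<inter> Y = {} \<and> X \<union> Y = V \<and>
     (\<forall>e\<in>E. \<exists>x\<in>X. \<exists>y\<in>Y. e = {x, y})"

definition ecard :: "'b set \<Rightarrow> enat" where
  "ecard A = (if finite A then enat (card A) else \<infinity>)"

text \<open>S_{2n}(G;H1,H2): vertex (v,0) is the original v, (v,k) with k \<in> [1,n] is the copy v^k.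
  Only the edge sets E1, E2 of H1, H2 matter.\<close>
definition S2n_V :: "'a set \<Rightarrow> 'a set \<Rightarrow> nat \<Rightarrow> ('a \<times> nat) set" where
  "S2n_V X Y n = (X \<union> Y) \<times> {0..n}"

definition S2n_E :: "'a set \<Rightarrow> 'a set \<Rightarrow> 'a set set \<Rightarrow> 'a set set \<Rightarrow> 'a set set \<Rightarrow> nat
    \<Rightarrow> ('a \<times> nat) set set" where
  "S2n_E X Y E E1 E2 n =
     {{(x, 0), (y, 0)} | x y. {x, y} \<in> E}
   \<union> {{(x, 0), (y, k)} | x y k. x \<in> X \<and> y \<in> Y \<and> {x, y} \<in> E1 \<and> k \<in> {1..n}}
   \<union> {{(x, k), (y, 0)} | x y k. x \<in> X \<and> y \<in> Y \<and> {x, y} \<in> E2 \<and> k \<in> {1..n}}"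

end

theory Submission
  imports Defs
begin

lemma sem_from_sums:
  fixes L :: "'b \<Rightarrow> int" and E' :: "'b set set" and m :: int
  assumes bL: "bij_betw L V' {1..int (card V')}"
    and iS: "inj_on (\<lambda>e. \<Sum>v\<in>e. L v) E'"
    and imS: "(\<lambda>e. \<Sum>v\<in>e. L v) ` E' = {m..m + int (card E') - 1}"
    and ed: "\<forall>e\<in>E'. \<exists>x y. x \<noteq> y \<and> e = {x, y}"
  shows "sem_labeling V' E' (case_sum L (\<lambda>e. int (card V') + int (card E') + m - (\<Sum>v\<in>e. L v)))
           (int (card V') + int (card E') + m)"
proof -
  define K where "K = int (card V') + int (card E') + m"
  define F where "F = case_sum L (\<lambda>e. K - (\<Sum>v\<in>e. L v))"
  have b1: "bij_betw F (Inl ` V') {1..int (card V')}"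
    using bL unfolding bij_betw_def inj_on_def F_def by (auto simp: image_image)
  have b2: "bij_betw F (Inr ` E') {int (card V') + 1..int (card V') + int (card E')}"
  proof -
    have "inj_on F (Inr ` E')" using iS unfolding inj_on_def F_def by auto
    moreover have "F ` (Inr ` E') = (\<lambda>s. K - s) ` ((\<lambda>e. \<Sum>v\<in>e. L v) ` E')"
      by (auto simp: F_def image_image)
    moreover have "(\<lambda>s. K - s) ` {m..m + int (card E') - 1} = {int (card V') + 1..int (card V') + int (card E')}"
    proof
      show "(\<lambda>s. K - s) ` {m..m + int (card E') - 1} \<subseteq> {int (card V') + 1..int (card V') + int (card E')}"
        by (auto simp: K_def)
      show "{int (card V') + 1..int (card V') + int (card E')} \<subseteq> (\<lambda>s. K - s) ` {m..m + int (card E') - 1}"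
      proof
        fix w assume "w \<in> {int (card V') + 1..int (card V') + int (card E')}"
        then have "K - w \<in> {m..m + int (card E') - 1}" "w = K - (K - w)" by (auto simp: K_def)
        then show "w \<in> (\<lambda>s. K - s) ` {m..m + int (card E') - 1}" by blast
      qed
    qed
    ultimately show ?thesis using imS by (simp add: bij_betw_def)
  qed
  have "bij_betw F (Inl ` V' \<union> Inr ` E') ({1..int (card V')} \<union> {int (card V') + 1..int (card V') + int (card E')})"
    by (rule bij_betw_combine[OF b1 b2]) auto
  moreover have "{1..int (card V')} \<union> {int (card V') + 1..int (card V') + int (card E')} = {1..int (card V' + card E')}"
    by auto
  ultimately have bF: "bij_betw F (Inl ` V' \<union> Inr ` E') {1..int (card V' + card E')}" by simp
  have iF: "F ` (Inl ` V') = {1..int (card V')}" using b1 by (simp add: bij_betw_def)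
  have vF: "\<forall>x y. {x, y} \<in> E' \<longrightarrow> F (Inl x) + F (Inr {x, y}) + F (Inl y) = K"
  proof (intro allI impI)
    fix x y assume "{x, y} \<in> E'"
    with ed obtain a b where "a \<noteq> b" "{x, y} = {a, b}" by blast
    then have "x \<noteq> y" by (metis doubleton_eq_iff)
    then show "F (Inl x) + F (Inr {x, y}) + F (Inl y) = K" by (simp add: F_def)
  qed
  show ?thesis using bF iF vF unfolding sem_labeling_def F_def K_def by simp
qed


lemma decode:
  fixes N a a' r r' :: int
  assumes "N * a + r = N * a' + r'" "0 \<le> r" "r < N" "0 \<le> r'" "r' < N"
  shows "a = a' \<and> r = r'"
proof -
  have "a = a'"
  proof (rule ccontr)
    assume "a \<noteq> a'"
    then consider "a < a'" | "a' < a" by linarith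
    then show False
    proof cases
      case 1 then have "a + 1 \<le> a'" by simp
      then have "N * (a + 1) \<le> N * a'" using assms by (intro mult_left_mono) auto
      then show False using assms by (simp add: algebra_simps)
    next
      case 2 then have "a' + 1 \<le> a" by simp
      then have "N * (a' + 1) \<le> N * a" using assms by (intro mult_left_mono) auto
      then show False using assms by (simp add: algebra_simps)
    qed
  qed
  then show ?thesis using assms by simp
qed

lemma key:
  fixes V X Y :: "'a set" and E E1 E2 :: "'a set set" and f0 :: "'a + 'a set \<Rightarrow> int"
  assumes sg: "simple_graph V E"
    and bp: "bipartite_with V E X Y"
    and sl: "sem_labeling V E f0 k0"
    and U: "E1 \<union> E2 = E" and D: "E1 \<inter> E2 = {}" and tn: "t \<le> n"
  shows "int (card V) * (int n + 1) + int (card E) * (int n + 1)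
           + (int n + 1) * (k0 - int (card V) - int (card E) - 2) + 2 + int t
         \<in> sigma (S2n_V X Y n) (S2n_E X Y E E1 E2 n)"
proof -
  define N where "N = int n + 1"
  define p where "p = card V"
  define q where "q = card E"
  have fV: "finite V" using sg by (simp add: simple_graph_def)
  have EV: "E \<subseteq> Pow V" using sg unfolding simple_graph_def by auto
  have fE: "finite E" by (meson EV fV finite_Pow_iff finite_subset)
  have XY: "X \<inter> Y = {}" "X \<union> Y = V" and Eb: "\<forall>e\<in>E. \<exists>x\<in>X. \<exists>y\<in>Y. e = {x, y}"
    using bp by (auto simp: bipartite_with_def)
  define fv where "fv = (\<lambda>v. f0 (Inl v))"
  have bij0: "bij_betw f0 (Inl ` V \<union> Inr ` E) {1 .. int (p + q)}"
    and im0: "f0 ` (Inl ` V) = {1 .. int p}"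
    and val0: "\<And>x y. {x, y} \<in> E \<Longrightarrow> f0 (Inl x) + f0 (Inr {x, y}) + f0 (Inl y) = k0"
    using sl by (auto simp: sem_labeling_def p_def q_def)
  have inj0: "inj_on f0 (Inl ` V \<union> Inr ` E)" using bij0 by (simp add: bij_betw_def)
  have G1: "v \<in> V \<Longrightarrow> 1 \<le> fv v \<and> fv v \<le> int p" for v using im0 fv_def by auto
  have G2: "inj_on fv V"
  proof -
    have "inj_on f0 (Inl ` V)" using inj0 by (rule inj_on_subset) auto
    then have "inj_on (f0 \<circ> Inl) V" by (intro comp_inj_on) auto
    then show ?thesis by (simp add: fv_def o_def)
  qed
  have G4: "f0 ` (Inr ` E) = {int p + 1 .. int p + int q}"
  proof -
    have e: "Inr ` E = (Inl ` V \<union> Inr ` E) - Inl ` V" by auto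
    have "f0 ` (Inr ` E) = f0 ` (Inl ` V \<union> Inr ` E) - f0 ` (Inl ` V)"
      by (subst e, rule inj_on_image_set_diff[OF inj0]) auto
    also have "\<dots> = {1 .. int (p + q)} - {1 .. int p}" using bij0 im0 by (simp add: bij_betw_def)
    also have "\<dots> = {int p + 1 .. int p + int q}" by auto
    finally show ?thesis .
  qed
  have G5: "inj_on f0 (Inr ` E)" using inj0 by (rule inj_on_subset) auto
  define s0 where "s0 = k0 - int p - int q"
  define P where "P = {(x, y). x \<in> X \<and> y \<in> Y \<and> {x, y} \<in> E}"
  define sg where "sg = (\<lambda>(x, y). fv x + fv y)"
  have S1: "z \<in> P \<Longrightarrow> s0 \<le> sg z \<and> sg z \<le> s0 + int q - 1" for z
  proof -
    assume "z \<in> P"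
    then obtain x y where z: "z = (x, y)" "{x, y} \<in> E" unfolding P_def by auto
    then have "f0 (Inr {x, y}) \<in> {int p + 1 .. int p + int q}" using G4 by blast
    then show ?thesis using val0[OF z(2)] z(1) by (auto simp: sg_def fv_def s0_def)
  qed
  have S2: "s \<in> {s0 .. s0 + int q - 1} \<Longrightarrow> \<exists>z\<in>P. sg z = s" for s
  proof -
    assume "s \<in> {s0 .. s0 + int q - 1}"
    then have "k0 - s \<in> f0 ` (Inr ` E)" unfolding G4 s0_def by auto
    then obtain e where e: "e \<in> E" "f0 (Inr e) = k0 - s" by auto
    then obtain x y where xy: "x \<in> X" "y \<in> Y" "e = {x, y}" using Eb by blast
    then have "(x, y) \<in> P" using e unfolding P_def by auto
    moreover have "sg (x, y) = s" using val0[of x y] e xy by (auto simp: sg_def fv_def)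
    ultimately show ?thesis by blast
  qed
  have S3: "inj_on sg P"
  proof (rule inj_onI)
    fix z z' assume z: "z \<in> P" "z' \<in> P" "sg z = sg z'"
    obtain x y where xy: "z = (x, y)" "x \<in> X" "y \<in> Y" "{x, y} \<in> E" using z(1) unfolding P_def by auto
    obtain x' y' where xy': "z' = (x', y')" "x' \<in> X" "y' \<in> Y" "{x', y'} \<in> E" using z(2) unfolding P_def by auto
    have "f0 (Inr {x, y}) = f0 (Inr {x', y'})"
      using val0[OF xy(4)] val0[OF xy'(4)] z(3) xy xy' by (simp add: sg_def fv_def)
    then have "{x, y} = {x', y'}" using G5 xy(4) xy'(4) by (auto simp: inj_on_def)
    then have "x = x' \<and> y = y'" using XY(1) xy xy' by (auto simp: doubleton_eq_iff)
    then show "z = z'" using xy xy' by simp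
  qed
  define c where "c = (\<lambda>k::nat. int (if k = 0 then t else if k = t then 0 else k))"
  have c0: "c 0 = int t" by (simp add: c_def)
  have cr: "k \<le> n \<Longrightarrow> 0 \<le> c k \<and> c k \<le> int n" for k using tn by (auto simp: c_def)
  have ci: "inj_on c {0..n}" by (auto simp: inj_on_def c_def split: if_splits)
  have cs: "0 \<le> r \<Longrightarrow> r \<le> int n \<Longrightarrow> \<exists>k\<in>{0..n}. c k = r" for r
  proof -
    assume r: "0 \<le> r" "r \<le> int n"
    define k where "k = (if nat r = t then 0 else if nat r = 0 then t else nat r)"
    have "k \<in> {0..n}" using r tn by (auto simp: k_def)
    moreover have "c k = r" using r by (auto simp: k_def c_def)
    ultimately show ?thesis by blast
  qed
  have Npos: "N > 0" by (simp add: N_def)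
  define L where "L = (\<lambda>(v, k). N * (fv v - 1) + c k + 1)"
  define V' where "V' = S2n_V X Y n"
  have V'eq: "V' = V \<times> {0..n}" using XY by (simp add: S2n_V_def V'_def)
  have cardV': "int (card V') = int p * N" by (simp add: V'eq card_cartesian_product p_def N_def algebra_simps)
  have Lr: "z \<in> V' \<Longrightarrow> 1 \<le> L z \<and> L z \<le> int p * N" for z
  proof -
    assume "z \<in> V'"
    then obtain v k where z: "z = (v, k)" "v \<in> V" "k \<le> n" by (auto simp: V'eq)
    have a: "1 \<le> fv v" "fv v \<le> int p" using G1[OF z(2)] by auto
    have b: "0 \<le> c k" "c k \<le> int n" using cr[OF z(3)] by auto
    have "0 \<le> N * (fv v - 1)" using a Npos by simp
    moreover have "N * (fv v - 1) \<le> N * (int p - 1)" using a Npos by (intro mult_left_mono) auto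
    ultimately show ?thesis using b z(1) by (auto simp: L_def N_def algebra_simps)
  qed
  have Li: "inj_on L V'"
  proof (rule inj_onI)
    fix z z' assume zz: "z \<in> V'" "z' \<in> V'" "L z = L z'"
    obtain v k where z: "z = (v, k)" "v \<in> V" "k \<le> n" using zz(1) by (auto simp: V'eq)
    obtain v' k' where z': "z' = (v', k')" "v' \<in> V" "k' \<le> n" using zz(2) by (auto simp: V'eq)
    have "N * (fv v - 1) + c k = N * (fv v' - 1) + c k'" using zz(3) z z' by (simp add: L_def)
    then have "fv v - 1 = fv v' - 1 \<and> c k = c k'"
      using cr[OF z(3)] cr[OF z'(3)] by (intro decode) (auto simp: N_def)
    then have "v = v'" "k = k'" using G2 ci z z' by (auto simp: inj_on_def)
    then show "z = z'" using z z' by simp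
  qed
  have fV': "finite V'" using fV by (simp add: V'eq)
  have bL: "bij_betw L V' {1..int (card V')}"
  proof -
    have "L ` V' \<subseteq> {1..int (card V')}" using Lr cardV' by auto
    moreover have "card (L ` V') = card {1..int (card V')}" using card_image[OF Li] by simp
    ultimately have "L ` V' = {1..int (card V')}" by (intro card_subset_eq) auto
    then show ?thesis using Li by (simp add: bij_betw_def)
  qed
  define P' where "P' = P \<times> {0..n}"
  define g where "g = (\<lambda>((x, y), j). if {x, y} \<in> E1 then {(x, 0::nat), (y, j)} else {(x, j), (y, 0)})"
  define h where "h = (\<lambda>((x, y), j). N * (sg (x, y) - 2) + 2 + int t + c j)"
  define E' where "E' = S2n_E X Y E E1 E2 n"
  define m where "m = N * (s0 - 2) + 2 + int t"
  have E1E: "E1 \<subseteq> E" "E2 \<subseteq> E" using U by auto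
  have E'eq: "E' = g ` P'"
  proof
    show "E' \<subseteq> g ` P'"
    proof
      fix e assume "e \<in> E'"
      then consider (a) x y where "e = {(x, 0), (y, 0)}" "{x, y} \<in> E"
        | (b) x y k where "e = {(x, 0), (y, k)}" "x \<in> X" "y \<in> Y" "{x, y} \<in> E1" "k \<in> {1..n}"
        | (c) x y k where "e = {(x, k), (y, 0)}" "x \<in> X" "y \<in> Y" "{x, y} \<in> E2" "k \<in> {1..n}"
        unfolding E'_def S2n_E_def by blast
      then show "e \<in> g ` P'"
      proof cases
        case a
        then obtain x' y' where xy: "x' \<in> X" "y' \<in> Y" "{x, y} = {x', y'}" using Eb by metis
        have "((x', y'), 0) \<in> P'" using xy a by (auto simp: P'_def P_def)
        moreover have "e = g ((x', y'), 0)" using xy a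
          by (auto simp: g_def doubleton_eq_iff insert_commute)
        ultimately show ?thesis by blast
      next
        case b
        have "((x, y), k) \<in> P'" using b E1E by (auto simp: P'_def P_def)
        moreover have "e = g ((x, y), k)" using b by (simp add: g_def)
        ultimately show ?thesis by blast
      next
        case c
        have "((x, y), k) \<in> P'" using c E1E by (auto simp: P'_def P_def)
        moreover have "e = g ((x, y), k)" using c D by (auto simp: g_def)
        ultimately show ?thesis by blast
      qed
    qed
    show "g ` P' \<subseteq> E'"
    proof
      fix e assume "e \<in> g ` P'"
      then obtain x y j where xy: "x \<in> X" "y \<in> Y" "{x, y} \<in> E" "j \<le> n" "e = g ((x, y), j)"
        by (auto simp: P'_def P_def)
      show "e \<in> E'"
      proof (cases "{x, y} \<in> E1")
        case True
        show ?thesis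
        proof (cases "j = 0")
          case True then show ?thesis using xy \<open>{x, y} \<in> E1\<close>
            unfolding E'_def S2n_E_def g_def by auto
        next
          case False then have "e = {(x, 0), (y, j)}" "j \<in> {1..n}" using xy True by (auto simp: g_def)
          then show ?thesis using xy True unfolding E'_def S2n_E_def by blast
        qed
      next
        case False
        then have F2: "{x, y} \<in> E2" using U xy by auto
        show ?thesis
        proof (cases "j = 0")
          case True then show ?thesis using xy False
            unfolding E'_def S2n_E_def g_def by auto
        next
          case False then have "e = {(x, j), (y, 0)}" "j \<in> {1..n}" using xy \<open>{x, y} \<notin> E1\<close> by (auto simp: g_def)
          then show ?thesis using xy F2 unfolding E'_def S2n_E_def by blast
        qed
      qed
    qed
  qed
  define S where "S = (\<lambda>e. \<Sum>v\<in>e. L v)"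
  have Sg: "z \<in> P' \<Longrightarrow> S (g z) = h z" for z
  proof -
    assume "z \<in> P'"
    then obtain x y j where xy: "z = ((x, y), j)" "x \<in> X" "y \<in> Y" "{x, y} \<in> E"
      by (auto simp: P'_def P_def)
    have "x \<noteq> y" using xy XY(1) by auto
    then show ?thesis using xy c0
      by (auto simp: S_def g_def h_def L_def sg_def algebra_simps)
  qed
  have hi: "inj_on h P'"
  proof (rule inj_onI)
    fix z z' assume zz: "z \<in> P'" "z' \<in> P'" "h z = h z'"
    obtain a j where z: "z = (a, j)" "a \<in> P" "j \<le> n" using zz(1) by (auto simp: P'_def)
    obtain a' j' where z': "z' = (a', j')" "a' \<in> P" "j' \<le> n" using zz(2) by (auto simp: P'_def)
    have "N * (sg a - 2) + c j = N * (sg a' - 2) + c j'" using zz(3) z z'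
      by (cases a; cases a') (simp add: h_def)
    then have "sg a - 2 = sg a' - 2 \<and> c j = c j'"
      using cr[OF z(3)] cr[OF z'(3)] by (intro decode) (auto simp: N_def)
    then have "a = a'" "j = j'" using S3 ci z z' by (auto simp: inj_on_def)
    then show "z = z'" using z z' by simp
  qed
  have hr: "h ` P' = {m .. m + N * int q - 1}"
  proof
    show "h ` P' \<subseteq> {m .. m + N * int q - 1}"
    proof
      fix w assume "w \<in> h ` P'"
      then obtain a j where z: "w = h (a, j)" "a \<in> P" "j \<le> n" by (auto simp: P'_def)
      have s: "s0 \<le> sg a" "sg a \<le> s0 + int q - 1" using S1[OF z(2)] by auto
      have cc: "0 \<le> c j" "c j \<le> int n" using cr[OF z(3)] by auto
      have hw: "w = N * (sg a - 2) + 2 + int t + c j" using z(1) by (cases a) (simp add: h_def)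
      have "N * (s0 - 2) \<le> N * (sg a - 2)" using s Npos by (intro mult_left_mono) auto
      moreover have "N * (sg a - 2) \<le> N * (s0 + int q - 1 - 2)" using s Npos by (intro mult_left_mono) auto
      ultimately show "w \<in> {m .. m + N * int q - 1}" using hw cc
        by (auto simp: m_def N_def algebra_simps)
    qed
    show "{m .. m + N * int q - 1} \<subseteq> h ` P'"
    proof
      fix w assume w: "w \<in> {m .. m + N * int q - 1}"
      define d where "d = w - m"
      define a where "a = d div N"
      define r where "r = d mod N"
      have dar: "d = N * a + r" by (simp add: a_def r_def)
      have r0: "0 \<le> r" "r < N" using Npos by (auto simp: r_def)
      have d0: "0 \<le> d" "d < N * int q" using w by (auto simp: d_def)
      have a0: "0 \<le> a" using d0 Npos by (simp add: a_def pos_imp_zdiv_nonneg_iff)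
      have "N * a < N * int q" using dar r0 d0 by linarith
      then have aq: "a < int q" using Npos by simp
      obtain z where z: "z \<in> P" "sg z = s0 + a" using S2[of "s0 + a"] a0 aq by auto
      obtain k where k: "k \<in> {0..n}" "c k = r" using cs[of r] r0 by (auto simp: N_def)
      have "(z, k) \<in> P'" using z k by (simp add: P'_def)
      moreover have "h (z, k) = w" using z k dar
        by (cases z) (simp add: h_def d_def m_def algebra_simps)
      ultimately show "w \<in> h ` P'" by force
    qed
  qed
  have Sgi: "inj_on (S \<circ> g) P'" using hi Sg by (simp add: inj_on_def)
  have iS: "inj_on S E'" using Sgi unfolding E'eq by (rule inj_on_imageI)
  have gi: "inj_on g P'" using Sgi by (rule inj_on_imageI2)
  have "(S \<circ> g) ` P' = h ` P'" using Sg by (auto simp: image_iff)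
  then have SE: "S ` E' = {m .. m + N * int q - 1}" using hr by (simp add: E'eq image_comp)
  have "card E' = card (S ` E')" using card_image[OF iS] by simp
  then have cE: "int (card E') = N * int q" using SE Npos by simp
  have ed: "\<forall>e\<in>E'. \<exists>x y. x \<noteq> y \<and> e = {x, y}"
  proof
    fix e assume "e \<in> E'"
    then obtain x y j where xy: "x \<in> X" "y \<in> Y" "e = g ((x, y), j)"
      by (auto simp: E'eq P'_def P_def)
    have "x \<noteq> y" using xy XY(1) by auto
    then show "\<exists>x y. x \<noteq> y \<and> e = {x, y}" using xy by (auto simp: g_def)
  qed
  have "sem_labeling V' E' (case_sum L (\<lambda>e. int (card V') + int (card E') + m - (\<Sum>v\<in>e. L v)))
           (int (card V') + int (card E') + m)"
    using bL iS SE cE ed unfolding S_def by (intro sem_from_sums) auto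
  moreover have "int (card V') + int (card E') + m = int (card V) * (int n + 1) + int (card E) * (int n + 1)
           + (int n + 1) * (k0 - int (card V) - int (card E) - 2) + 2 + int t"
    using cardV' cE by (simp add: m_def s0_def N_def p_def q_def algebra_simps)
  ultimately show ?thesis unfolding sigma_def V'_def E'_def by auto
qed

theorem mainTheorem12:
  fixes V X Y :: "'a set" and E E1 E2 :: "'a set set"
  assumes "simple_graph V E"
    and "bipartite_with V E X Y"
    and "super_edge_magic V E"
    and "E1 \<subseteq> E" and "E2 \<subseteq> E" and "E1 \<union> E2 = E" and "E1 \<inter> E2 = {}"
  shows "\<forall>M::nat. eventually
           (\<lambda>n. enat M \<le> ecard (sigma (S2n_V X Y n) (S2n_E X Y E E1 E2 n))) sequentially"
proof
  fix M :: nat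
  obtain f0 k0 where sl: "sem_labeling V E f0 k0" using assms(3) by (auto simp: super_edge_magic_def)
  have "enat M \<le> ecard (sigma (S2n_V X Y n) (S2n_E X Y E E1 E2 n))" if "n \<ge> M" for n
  proof -
    define A where "A = sigma (S2n_V X Y n) (S2n_E X Y E E1 E2 n)"
    define K0 where "K0 = int (card V) * (int n + 1) + int (card E) * (int n + 1)
           + (int n + 1) * (k0 - int (card V) - int (card E) - 2) + 2"
    have sub: "(\<lambda>t. K0 + int t) ` {0..n} \<subseteq> A"
      using key[OF assms(1) assms(2) sl assms(6) assms(7)] by (auto simp: A_def K0_def)
    show ?thesis
    proof (cases "finite A")
      case True
      have "card ((\<lambda>t. K0 + int t) ` {0..n}) = n + 1" by (simp add: card_image inj_on_def)
      then have "n + 1 \<le> card A" using card_mono[OF True sub] by simp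
      then show ?thesis using True that unfolding A_def[symmetric] by (simp add: ecard_def)
    next
      case False then show ?thesis unfolding A_def[symmetric] by (simp add: ecard_def)
    qed
  qed
  then show "eventually (\<lambda>n. enat M \<le> ecard (sigma (S2n_V X Y n) (S2n_E X Y E E1 E2 n))) sequentially"
    using eventually_sequentially by blast
qed

end
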